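(* Consider online caching with catalogue size $N$, cache capacity $C<N/2$, batch size $B$ and horizon $T$. Suppose that at each slot $t$ each of the $B$ requests of the batch is independently sampled with probability $f\in(0,1]$ (independently across slots and of the algorithm's perturbations), let $\hat d_t\in\mathbb{N}^N$ count, for each file, the number of sampled requests for that file, and use the estimator $\hat r_t=\frac{1}{f}\hat d_t$ (which satisfies $\mathbb{E}[\hat r_t]=r_t$). Then NFPL with $\eta=\frac{B}{f}\sqrt{T/(2C)}$ satisfies $$\bar{\mathcal{R}}_T(\mathrm{NFPL})\le 2\sqrt{2}\,\frac{B}{f}\sqrt{C\,T}.$$
   Context: Online caching setting: files are indexed by $\{1,\dots,N\}$. At each time slot $t=1,\dots,T$ a batch of $B$ requests arrives, summarized by $r_t\in\mathbb{N}^N$ with $r_{t,i}$ the number of requests for file $i$ and $\sum_i r_{t,i}=B$; the sequence $r_1,\dots,r_T$ is fixed in advance (oblivious). The decision set is the capped simplex $\mathcal{X}=\{x\in[0,1]^N:\sum_{i=1}^N x_i=C\}$ and the cost of decision $x$ at slot $t$ is $\langle r_t,x\rangle$. For $s\in\mathbb{R}^N$, $M(s)\in\arg\min_{x\in\mathcal{X}}\langle s,x\rangle$. The NFPL algorithm with parameter $\eta$: at each slot $t$ draw $\gamma_t$ uniformly from $[0,\eta]^N$ (independently), play $x_t=M\big(\sum_{s<t}\hat r_s+\gamma_t\big)$, then observe $\hat r_t$. The (weak/pseudo) regret is $\bar{\mathcal{R}}_T=\mathbb{E}\big[\sum_{t=1}^T\langle r_t,x_t\rangle\big]-\min_{x\in\mathcal{X}}\sum_{t=1}^T\langle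 r_t,x\rangle$, expectation over all the algorithm's randomness, including the sampling. *)

theory Defs
  imports "HOL-Probability.Probability"
begin

text \<open>Files are indexed by 0..N-1 and time slots by 0..T-1.
  A request sequence is r :: nat => nat => nat, with r t i the number of
  requests for file i in slot t.\<close>

definition capped_simplex :: "nat \<Rightarrow> nat \<Rightarrow> (nat \<Rightarrow> real) set" where
  "capped_simplex N C = {x. (\<forall>i<N. 0 \<le> x i \<and> x i \<le> 1) \<and> (\<Sum>i<N. x i) = real C}"

definition is_min_oracle :: "nat \<Rightarrow> nat \<Rightarrow> ((nat \<Rightarrow> real) \<Rightarrow> (nat \<Rightarrow> real)) \<Rightarrow> bool" where
  "is_min_oracle N C M \<longleftrightarrow> (\<forall>s. M s \<in> capped_simplex N C \<and>
      (\<forall>y\<in>capped_simplex N C. (\<Sum>i<N. s i * M s i) \<le> (\<Sum>i<N. s i * y i)))"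

text \<open>Individual requests: request number j < r t i for file i at slot t is
  identified with the triple (t,i,j); each is sampled by an independent Bernoulli(f) coin.\<close>
definition sample_idx :: "nat \<Rightarrow> nat \<Rightarrow> (nat \<Rightarrow> nat \<Rightarrow> nat) \<Rightarrow> (nat \<times> nat \<times> nat) set" where
  "sample_idx T N r = {(t, i, j). t < T \<and> i < N \<and> j < r t i}"

definition sample_space :: "nat \<Rightarrow> nat \<Rightarrow> (nat \<Rightarrow> nat \<Rightarrow> nat) \<Rightarrow> real \<Rightarrow> (nat \<times> nat \<times> nat \<Rightarrow> bool) measure" where
  "sample_space T N r f = PiM (sample_idx T N r) (\<lambda>_. measure_pmf (bernoulli_pmf f))"

definition pert_space :: "nat \<Rightarrow> nat \<Rightarrow> real \<Rightarrow> (nat \<times> nat \<Rightarrow> real) measure" where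
  "pert_space T N \<eta> = PiM ({..<T} \<times> {..<N}) (\<lambda>_. uniform_measure lborel {0..\<eta>})"

definition nfpl_space :: "nat \<Rightarrow> nat \<Rightarrow> (nat \<Rightarrow> nat \<Rightarrow> nat) \<Rightarrow> real \<Rightarrow> real
    \<Rightarrow> ((nat \<times> nat \<times> nat \<Rightarrow> bool) \<times> (nat \<times> nat \<Rightarrow> real)) measure" where
  "nfpl_space T N r f \<eta> = sample_space T N r f \<Otimes>\<^sub>M pert_space T N \<eta>"

definition dhat :: "(nat \<Rightarrow> nat \<Rightarrow> nat) \<Rightarrow> (nat \<times> nat \<times> nat \<Rightarrow> bool) \<Rightarrow> nat \<Rightarrow> nat \<Rightarrow> nat" where
  "dhat r \<sigma> t i = card {j. j < r t i \<and> \<sigma> (t, i, j)}"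

definition rhat :: "(nat \<Rightarrow> nat \<Rightarrow> nat) \<Rightarrow> real \<Rightarrow> (nat \<times> nat \<times> nat \<Rightarrow> bool) \<Rightarrow> nat \<Rightarrow> nat \<Rightarrow> real" where
  "rhat r f \<sigma> t i = real (dhat r \<sigma> t i) / f"

definition nfpl_decision :: "((nat \<Rightarrow> real) \<Rightarrow> (nat \<Rightarrow> real)) \<Rightarrow> (nat \<Rightarrow> nat \<Rightarrow> nat) \<Rightarrow> real
    \<Rightarrow> (nat \<times> nat \<times> nat \<Rightarrow> bool) \<Rightarrow> (nat \<times> nat \<Rightarrow> real) \<Rightarrow> nat \<Rightarrow> nat \<Rightarrow> real" where
  "nfpl_decision M r f \<sigma> \<gamma> t = M (\<lambda>i. (\<Sum>s<t. rhat r f \<sigma> s i) + \<gamma> (t, i))"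

definition nfpl_cost :: "nat \<Rightarrow> nat \<Rightarrow> ((nat \<Rightarrow> real) \<Rightarrow> (nat \<Rightarrow> real)) \<Rightarrow> (nat \<Rightarrow> nat \<Rightarrow> nat) \<Rightarrow> real
    \<Rightarrow> (nat \<times> nat \<times> nat \<Rightarrow> bool) \<times> (nat \<times> nat \<Rightarrow> real) \<Rightarrow> real" where
  "nfpl_cost T N M r f \<omega> =
     (\<Sum>t<T. \<Sum>i<N. real (r t i) * nfpl_decision M r f (fst \<omega>) (snd \<omega>) t i)"

definition nfpl_pseudo_regret :: "nat \<Rightarrow> nat \<Rightarrow> nat \<Rightarrow> (nat \<Rightarrow> nat \<Rightarrow> nat) \<Rightarrow> real \<Rightarrow> real
    \<Rightarrow> ((nat \<Rightarrow> real) \<Rightarrow> (nat \<Rightarrow> real)) \<Rightarrow> real" where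
  "nfpl_pseudo_regret N C T r f \<eta> M =
     (\<integral>\<omega>. nfpl_cost T N M r f \<omega> \<partial>nfpl_space T N r f \<eta>)
     - (INF x\<in>capped_simplex N C. \<Sum>t<T. \<Sum>i<N. real (r t i) * x i)"

end

theory Submission
  imports Defs
begin


lemma unif_integral:
  fixes \<eta>::real and \<phi> :: "real \<Rightarrow> real"
  assumes "0 < \<eta>" and [measurable]: "\<phi> \<in> borel_measurable borel"
  shows "(\<integral>y. \<phi> y \<partial>uniform_measure lborel {0..\<eta>}) = (\<integral>y. indicator {0..\<eta>} y * \<phi> y \<partial>lborel) / \<eta>"
proof -
  have "uniform_measure lborel {0..\<eta>} = density lborel (\<lambda>x. ennreal (indicator {0..\<eta>} x / \<eta>))"
    unfolding uniform_measure_def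
  proof (rule density_cong)
    show "(\<lambda>x. ennreal (indicator {0..\<eta>} x / \<eta>)) \<in> borel_measurable lborel" by simp
    show "(\<lambda>x. indicator {0..\<eta>} x / emeasure lborel {0..\<eta>}) \<in> borel_measurable lborel"
      by (simp add: divide_ennreal_def)
    show "AE x in lborel. indicator {0..\<eta>} x / emeasure lborel {0..\<eta>} = ennreal (indicator {0..\<eta>} x / \<eta>)"
      using assms divide_ennreal[of 1 \<eta>] by (auto simp: split: split_indicator)
  qed
  then have "(\<integral>y. \<phi> y \<partial>uniform_measure lborel {0..\<eta>}) = (\<integral>y. (indicator {0..\<eta>} y / \<eta>) *\<^sub>R \<phi> y \<partial>lborel)"
    using assms by (simp add: integral_density)
  also have "\<dots> = (\<integral>y. indicator {0..\<eta>} y * \<phi> y \<partial>lborel) / \<eta>"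
    by simp
  finally show ?thesis .
qed

lemma oneD_shift:
  fixes \<eta> L c::real and \<phi> :: "real \<Rightarrow> real"
  assumes eta: "0 < \<eta>" and [measurable]: "\<phi> \<in> borel_measurable borel"
    and bnd: "\<And>y. 0 \<le> \<phi> y \<and> \<phi> y \<le> L" and c: "0 \<le> c"
  shows "(\<integral>y. \<phi> y \<partial>uniform_measure lborel {0..\<eta>}) - (\<integral>y. \<phi> (y + c) \<partial>uniform_measure lborel {0..\<eta>}) \<le> L * c / \<eta>"
proof -
  have L: "0 \<le> L" using bnd[of 0] by auto
  have ii: "integrable lborel (\<lambda>y. indicator {a..b} y * L)" for a b :: real
    by (intro integrable_mult_left) (simp add: integrable_indicator_iff emeasure_lborel_Icc_eq)
  have intA: "integrable lborel (\<lambda>y. indicator {0..\<eta>} y * \<phi> y)"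
    by (rule Bochner_Integration.integrable_bound[OF ii[of 0 \<eta>]]) (use bnd L in \<open>auto intro!: AE_I2 split: split_indicator\<close>)
  have intB: "integrable lborel (\<lambda>y. indicator {c..c+\<eta>} y * \<phi> y)"
    by (rule Bochner_Integration.integrable_bound[OF ii[of c "c+\<eta>"]]) (use bnd L in \<open>auto intro!: AE_I2 split: split_indicator\<close>)
  have intC: "integrable lborel (\<lambda>y. indicator {0..c} y * L)"
    by (rule ii)
  have shift: "(\<integral>y. indicator {0..\<eta>} y * \<phi> (y + c) \<partial>lborel) = (\<integral>y. indicator {c..c+\<eta>} y * \<phi> y \<partial>lborel)"
    using lborel_integral_real_affine[of 1 "\<lambda>y. indicator {c..c+\<eta>} y * \<phi> y" c]
    by (simp add: add.commute indicator_def)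
  have "(\<integral>y. indicator {0..\<eta>} y * \<phi> y \<partial>lborel) - (\<integral>y. indicator {c..c+\<eta>} y * \<phi> y \<partial>lborel)
      = (\<integral>y. indicator {0..\<eta>} y * \<phi> y - indicator {c..c+\<eta>} y * \<phi> y \<partial>lborel)"
    using intA intB by simp
  also have "\<dots> \<le> (\<integral>y. indicator {0..c} y * L \<partial>lborel)"
  proof (rule integral_mono)
    show "integrable lborel (\<lambda>y. indicator {0..\<eta>} y * \<phi> y - indicator {c..c + \<eta>} y * \<phi> y)"
      using intA intB by simp
    show "integrable lborel (\<lambda>y. indicator {0..c} y * L)" by (fact intC)
    fix y show "indicator {0..\<eta>} y * \<phi> y - indicator {c..c + \<eta>} y * \<phi> y \<le> indicator {0..c} y * L"
      using bnd[of y] L c by (auto simp: indicator_def)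
  qed
  also have "\<dots> = L * c" using c by simp
  finally have *: "(\<integral>y. indicator {0..\<eta>} y * \<phi> y \<partial>lborel) - (\<integral>y. indicator {c..c+\<eta>} y * \<phi> y \<partial>lborel) \<le> L * c" .
  have e1: "(\<integral>y. \<phi> y \<partial>uniform_measure lborel {0..\<eta>}) = (\<integral>y. indicator {0..\<eta>} y * \<phi> y \<partial>lborel) / \<eta>"
    by (rule unif_integral[OF eta]) simp
  have e2: "(\<integral>y. \<phi> (y + c) \<partial>uniform_measure lborel {0..\<eta>}) = (\<integral>y. indicator {c..c+\<eta>} y * \<phi> y \<partial>lborel) / \<eta>"
    by (subst unif_integral[OF eta]) (simp_all add: shift)
  show ?thesis
    unfolding e1 e2 using * eta by (simp add: diff_divide_distrib[symmetric] divide_right_mono)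
qed



abbreviation U :: "real \<Rightarrow> real measure" where
  "U \<eta> \<equiv> uniform_measure lborel {0..\<eta>}"

lemma prob_U: "0 < \<eta> \<Longrightarrow> prob_space (U \<eta>)"
  by (intro prob_space_uniform_measure) (auto simp: emeasure_lborel_Icc_eq)

lemma vec_meas:
  assumes "\<And>i. (\<lambda>x. h x i) \<in> borel_measurable X"
  shows "h \<in> X \<rightarrow>\<^sub>M PiM UNIV (\<lambda>_. borel)"
proof -
  have "(\<lambda>x i. h x i) \<in> X \<rightarrow>\<^sub>M PiM UNIV (\<lambda>_. borel)"
    by (rule measurable_PiM_single') (auto simp: assms)
  then show ?thesis by simp
qed

lemma comp_meas_PiM:
  assumes "\<And>j. j \<in> I \<Longrightarrow> sets (Mf j) = sets (borel :: real measure)"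
  shows "(\<lambda>v. v i) \<in> borel_measurable (PiM I Mf)"
proof (cases "i \<in> I")
  case True
  have "(\<lambda>v. v i) \<in> PiM I Mf \<rightarrow>\<^sub>M Mf i" using True by simp
  then show ?thesis using measurable_cong_sets[OF refl assms[OF True]] by blast
next
  case False
  have eq: "\<And>v. v \<in> space (PiM I Mf) \<Longrightarrow> v i = (undefined::real)"
    using False by (auto simp: space_PiM PiE_def extensional_def)
  show ?thesis
    by (rule Sigma_Algebra.measurable_cong[where f="\<lambda>v. v i" and g="\<lambda>v. undefined" and M="PiM I Mf", THEN iffD2]) (simp_all add: eq)
qed

lemma int_le_const:
  assumes "prob_space X" "\<And>x. x \<in> space X \<Longrightarrow> h x \<le> c" "0 \<le> c"
  shows "integral\<^sup>L X h \<le> (c::real)"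
proof (cases "integrable X h")
  case True
  interpret prob_space X by fact
  have "integral\<^sup>L X h \<le> integral\<^sup>L X (\<lambda>_. c)"
    using True assms by (intro integral_mono) auto
  then show ?thesis by (simp add: prob_space)
next
  case False then show ?thesis using assms by (simp add: not_integrable_integral_eq)
qed

lemma coord_shift:
  fixes g :: "(nat \<Rightarrow> real) \<Rightarrow> real" and b :: "nat \<Rightarrow> real"
  assumes eta: "0 < \<eta>" and gm: "g \<in> borel_measurable (PiM UNIV (\<lambda>_. borel))"
    and gb: "\<And>s. 0 \<le> g s \<and> g s \<le> L" and k: "k < N" and c: "0 \<le> c"
  shows "(\<integral>u. g (\<lambda>i. b i + u i) \<partial>PiM {..<N} (\<lambda>_. U \<eta>))
       - (\<integral>u. g (\<lambda>i. (b(k := b k + c)) i + u i) \<partial>PiM {..<N} (\<lambda>_. U \<eta>)) \<le> L * c / \<eta>"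
proof -
  interpret product_sigma_finite "\<lambda>_. U \<eta>"
    using prob_U[OF eta] by (simp add: product_sigma_finite_def prob_space_imp_sigma_finite)
  interpret Q: prob_space "PiM {..<N} (\<lambda>_. U \<eta>)"
    using prob_U[OF eta] by (intro prob_space_PiM) auto
  let ?Q = "PiM {..<N} (\<lambda>_. U \<eta>)"
  interpret Ue: prob_space "U \<eta>" by (rule prob_U[OF eta])
  define b' where "b' = b(k := b k + c)"
  define I' where "I' = {..<N} - {k}"
  have NI: "{..<N} = insert k I'" "finite I'" "k \<notin> I'" using k by (auto simp: I'_def)
  have cm: "(\<lambda>v. v i) \<in> borel_measurable (PiM J (\<lambda>_. U \<eta>))" for i J
    by (rule comp_meas_PiM) simp
  have F: "(\<lambda>u. g (\<lambda>i. bb i + u i)) \<in> borel_measurable (PiM J (\<lambda>_. U \<eta>))" for bb J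
    by (rule measurable_compose[OF vec_meas gm]) (intro borel_measurable_add borel_measurable_const cm)
  have Fi: "integrable ?Q (\<lambda>u. g (\<lambda>i. bb i + u i))" for bb
    by (rule Q.integrable_const_bound[where B=L]) (use gb F in \<open>auto\<close>)
  have "(\<integral>u. g (\<lambda>i. b i + u i) \<partial>?Q) - (\<integral>u. g (\<lambda>i. b' i + u i) \<partial>?Q)
       = (\<integral>u. g (\<lambda>i. b i + u i) - g (\<lambda>i. b' i + u i) \<partial>?Q)"
    using Fi by simp
  also have "\<dots> = (\<integral>x. (\<integral>y. g (\<lambda>i. b i + (x(k:=y)) i) - g (\<lambda>i. b' i + (x(k:=y)) i) \<partial>U \<eta>) \<partial>PiM I' (\<lambda>_. U \<eta>))"
    unfolding NI(1) by (rule product_integral_insert[OF NI(2,3)]) (use Fi NI(1) in simp)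
  also have "\<dots> \<le> L * c / \<eta>"
  proof (rule int_le_const)
    show "prob_space (PiM I' (\<lambda>_. U \<eta>))" using prob_U[OF eta] by (intro prob_space_PiM) auto
    show "0 \<le> L * c / \<eta>" using gb[of undefined] c eta by auto
    fix x
    define w where "w = (\<lambda>i. b i + x i)"
    define \<phi> where "\<phi> = (\<lambda>y. g (w(k := b k + y)))"
    have e1: "(\<lambda>i. b i + (x(k:=y)) i) = w(k := b k + y)" for y by (auto simp: w_def)
    have e2: "(\<lambda>i. b' i + (x(k:=y)) i) = w(k := b k + (y + c))" for y by (auto simp: w_def b'_def)
    have \<phi>m: "\<phi> \<in> borel_measurable borel"
      unfolding \<phi>_def by (rule measurable_compose[OF vec_meas gm]) auto
    have \<phi>m': "(\<lambda>y. \<phi> (y + c)) \<in> borel_measurable borel"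
      using \<phi>m by measurable
    have i1: "integrable (U \<eta>) \<phi>"
      by (rule Ue.integrable_const_bound[where B=L])
         (use gb \<phi>m in \<open>auto simp: \<phi>_def\<close>)
    have i2: "integrable (U \<eta>) (\<lambda>y. \<phi> (y + c))"
      by (rule Ue.integrable_const_bound[where B=L])
         (use gb \<phi>m' in \<open>auto simp: \<phi>_def\<close>)
    have "(\<integral>y. g (\<lambda>i. b i + (x(k:=y)) i) - g (\<lambda>i. b' i + (x(k:=y)) i) \<partial>U \<eta>)
        = (\<integral>y. \<phi> y - \<phi> (y + c) \<partial>U \<eta>)"
      unfolding e1 e2 \<phi>_def ..
    also have "\<dots> = (\<integral>y. \<phi> y \<partial>U \<eta>) - (\<integral>y. \<phi> (y + c) \<partial>U \<eta>)"
      using i1 i2 by simp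
    also have "\<dots> \<le> L * c / \<eta>"
      by (rule oneD_shift[OF eta \<phi>m _ c]) (simp add: \<phi>_def gb)
    finally show "(\<integral>y. g (\<lambda>i. b i + (x(k:=y)) i) - g (\<lambda>i. b' i + (x(k:=y)) i) \<partial>U \<eta>) \<le> L * c / \<eta>" .
  qed
  finally show ?thesis unfolding b'_def .
qed



lemma stab:
  fixes g :: "(nat \<Rightarrow> real) \<Rightarrow> real" and b c :: "nat \<Rightarrow> real"
  assumes eta: "0 < \<eta>" and gm: "g \<in> borel_measurable (PiM UNIV (\<lambda>_. borel))"
    and gb: "\<And>s. 0 \<le> g s \<and> g s \<le> L" and c: "\<And>i. i < N \<Longrightarrow> 0 \<le> c i"
  shows "(\<integral>u. g (\<lambda>i. b i + u i) \<partial>PiM {..<N} (\<lambda>_. U \<eta>))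
       \<le> (\<integral>u. g (\<lambda>i. (b i + (if i < N then c i else 0)) + u i) \<partial>PiM {..<N} (\<lambda>_. U \<eta>)) + L * (\<Sum>i<N. c i) / \<eta>"
proof -
  let ?Q = "PiM {..<N} (\<lambda>_. U \<eta>)"
  define bn where "bn n = (\<lambda>i. b i + (if i < n then c i else 0))" for n
  have "n \<le> N \<Longrightarrow> (\<integral>u. g (\<lambda>i. b i + u i) \<partial>?Q) \<le> (\<integral>u. g (\<lambda>i. bn n i + u i) \<partial>?Q) + L * (\<Sum>i<n. c i) / \<eta>" for n
  proof (induction n)
    case 0 then show ?case by (simp add: bn_def)
  next
    case (Suc n)
    have e: "(bn n)(n := bn n n + c n) = bn (Suc n)"
      by (auto simp: bn_def)
    have "(\<integral>u. g (\<lambda>i. bn n i + u i) \<partial>?Q) - (\<integral>u. g (\<lambda>i. ((bn n)(n := bn n n + c n)) i + u i) \<partial>?Q) \<le> L * c n / \<eta>"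
      by (rule coord_shift[OF eta gm gb]) (use Suc.prems c in auto)
    then have "(\<integral>u. g (\<lambda>i. bn n i + u i) \<partial>?Q) \<le> (\<integral>u. g (\<lambda>i. bn (Suc n) i + u i) \<partial>?Q) + L * c n / \<eta>"
      unfolding e by simp
    with Suc show ?case by (simp add: add_divide_distrib distrib_left)
  qed
  from this[of N] show ?thesis by (simp add: bn_def)
qed



lemma oracle_simp:
  assumes "is_min_oracle N C M"
  shows "\<And>i. i < N \<Longrightarrow> 0 \<le> M s i" "\<And>i. i < N \<Longrightarrow> M s i \<le> 1" "(\<Sum>i<N. M s i) = real C"
    and "\<And>y. y \<in> capped_simplex N C \<Longrightarrow> (\<Sum>i<N. s i * M s i) \<le> (\<Sum>i<N. s i * y i)"
  using assms unfolding is_min_oracle_def capped_simplex_def by auto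

lemma argmin_eq:
  assumes o: "is_min_oracle N C M" and ag: "\<And>i. i < N \<Longrightarrow> s i = s' i"
  shows "(\<Sum>i<N. s i * M s' i) = (\<Sum>i<N. s i * M s i)"
proof -
  have m: "M z \<in> capped_simplex N C" for z using o unfolding is_min_oracle_def by auto
  have "(\<Sum>i<N. s i * M s' i) = (\<Sum>i<N. s' i * M s' i)" using ag by simp
  also have "\<dots> \<le> (\<Sum>i<N. s' i * M s i)" by (rule oracle_simp(4)[OF o m])
  also have "\<dots> = (\<Sum>i<N. s i * M s i)" using ag by simp
  finally have "(\<Sum>i<N. s i * M s' i) \<le> (\<Sum>i<N. s i * M s i)" .
  moreover have "(\<Sum>i<N. s i * M s i) \<le> (\<Sum>i<N. s i * M s' i)" by (rule oracle_simp(4)[OF o m])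
  ultimately show ?thesis by linarith
qed

lemma btl:
  fixes d :: "nat \<Rightarrow> nat \<Rightarrow> real" and u x :: "nat \<Rightarrow> real"
  assumes o: "is_min_oracle N C M" and x: "x \<in> capped_simplex N C"
    and u: "\<And>i. i < N \<Longrightarrow> 0 \<le> u i \<and> u i \<le> \<eta>"
  shows "(\<Sum>t<n. \<Sum>i<N. d t i * M (\<lambda>i. ((\<Sum>s<t. d s i) + (if i < N then d t i else 0)) + u i) i)
     \<le> (\<Sum>i<N. (\<Sum>s<n. d s i) * x i) + \<eta> * real C"
proof -
  have m: "M z \<in> capped_simplex N C" for z using o unfolding is_min_oracle_def by auto
  define V where "V m = (\<Sum>i<N. ((\<Sum>s<m. d s i) + u i) * M (\<lambda>i. (\<Sum>s<m. d s i) + u i) i)" for m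
  have key: "(\<Sum>t<n. \<Sum>i<N. d t i * M (\<lambda>i. ((\<Sum>s<t. d s i) + (if i < N then d t i else 0)) + u i) i) + V 0 \<le> V n" for n
  proof (induction n)
    case 0 then show ?case by simp
  next
    case (Suc n)
    define z where "z = M (\<lambda>i. ((\<Sum>s<n. d s i) + (if i < N then d n i else 0)) + u i)"
    have "V n \<le> (\<Sum>i<N. ((\<Sum>s<n. d s i) + u i) * z i)"
      unfolding V_def z_def by (rule oracle_simp(4)[OF o m])
    moreover have "(\<Sum>i<N. ((\<Sum>s<Suc n. d s i) + u i) * z i) = (\<Sum>i<N. ((\<Sum>s<n. d s i) + u i) * z i) + (\<Sum>i<N. d n i * z i)"
      by (simp add: sum.distrib[symmetric] algebra_simps)
    ultimately have "V n + (\<Sum>i<N. d n i * z i) \<le> (\<Sum>i<N. ((\<Sum>s<Suc n. d s i) + u i) * z i)"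
      by linarith
    also have "\<dots> = V (Suc n)"
      unfolding V_def z_def by (rule argmin_eq[OF o]) simp
    finally show ?case using Suc.IH by (simp add: z_def)
  qed
  have "V n \<le> (\<Sum>i<N. ((\<Sum>s<n. d s i) + u i) * x i)"
    unfolding V_def by (rule oracle_simp(4)[OF o x])
  also have "\<dots> = (\<Sum>i<N. (\<Sum>s<n. d s i) * x i) + (\<Sum>i<N. u i * x i)"
    by (simp add: sum.distrib[symmetric] algebra_simps)
  also have "(\<Sum>i<N. u i * x i) \<le> (\<Sum>i<N. \<eta> * x i)"
    using u x by (intro sum_mono mult_right_mono) (auto simp: capped_simplex_def)
  also have "\<dots> = \<eta> * real C" using x by (simp add: capped_simplex_def sum_distrib_left[symmetric])
  finally have 1: "V n \<le> (\<Sum>i<N. (\<Sum>s<n. d s i) * x i) + \<eta> * real C" by simp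
  have "0 \<le> V 0" unfolding V_def using u oracle_simp(1)[OF o] by (auto intro!: sum_nonneg)
  with key[of n] 1 show ?thesis by linarith
qed



lemma g_meas:
  assumes Mm: "M \<in> PiM UNIV (\<lambda>_. borel) \<rightarrow>\<^sub>M PiM UNIV (\<lambda>_. borel)"
  shows "(\<lambda>s. \<Sum>i<N. e i * (M s i :: real)) \<in> borel_measurable (PiM UNIV (\<lambda>_. borel))"
proof -
  have "(\<lambda>s. M s i) \<in> borel_measurable (PiM UNIV (\<lambda>_. borel))" for i
    using measurable_compose[OF Mm measurable_component_singleton[of i UNIV "\<lambda>_. borel"]] by simp
  then show ?thesis by (intro borel_measurable_sum borel_measurable_times borel_measurable_const) auto
qed

lemma g_bound:
  assumes o: "is_min_oracle N C M" and e: "\<And>i. i < N \<Longrightarrow> 0 \<le> e i"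
  shows "0 \<le> (\<Sum>i<N. e i * M s i) \<and> (\<Sum>i<N. e i * M s i) \<le> (\<Sum>i<N. e i)"
proof
  show "0 \<le> (\<Sum>i<N. e i * M s i)" using e oracle_simp(1)[OF o] by (auto intro!: sum_nonneg)
  show "(\<Sum>i<N. e i * M s i) \<le> (\<Sum>i<N. e i)"
    using e oracle_simp(2)[OF o] by (intro sum_mono) (auto intro: mult_left_le)
qed

lemma AE_cube:
  assumes eta: "0 < \<eta>"
  shows "AE u in PiM {..<(N::nat)} (\<lambda>_. U \<eta>). \<forall>i\<in>{..<N}. 0 \<le> u i \<and> u i \<le> \<eta>"
proof (rule AE_finite_allI)
  fix i assume i: "i \<in> {..<N}"
  have "AE y in U \<eta>. 0 \<le> y \<and> y \<le> \<eta>" by (rule AE_uniform_measureI) auto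
  then show "AE u in PiM {..<N} (\<lambda>_. U \<eta>). 0 \<le> u i \<and> u i \<le> \<eta>"
    by (rule AE_PiM_component[OF prob_U[OF eta] i])
qed simp

lemma shiftQ_meas:
  "(\<lambda>u. g (\<lambda>i. b i + u i)) \<in> borel_measurable (PiM J (\<lambda>_. U \<eta>))"
  if "g \<in> borel_measurable (PiM UNIV (\<lambda>_. borel))"
  for g :: "(nat \<Rightarrow> real) \<Rightarrow> real"
proof -
  have cm: "(\<lambda>v. v i) \<in> borel_measurable (PiM J (\<lambda>_. U \<eta>))" for i
    by (rule comp_meas_PiM) simp
  show ?thesis
    by (rule measurable_compose[OF vec_meas that]) (intro borel_measurable_add borel_measurable_const cm)
qed

lemma pathQ:
  fixes d :: "nat \<Rightarrow> nat \<Rightarrow> real" and x :: "nat \<Rightarrow> real"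
  assumes eta: "0 < \<eta>" and o: "is_min_oracle N C M" and x: "x \<in> capped_simplex N C"
    and Mm: "M \<in> PiM UNIV (\<lambda>_. borel) \<rightarrow>\<^sub>M PiM UNIV (\<lambda>_. borel)"
    and dpos: "\<And>t i. t < T \<Longrightarrow> i < N \<Longrightarrow> 0 \<le> d t i"
    and dsum: "\<And>t. t < T \<Longrightarrow> (\<Sum>i<N. d t i) \<le> K"
  shows "(\<Sum>t<T. \<integral>u. (\<Sum>i<N. d t i * M (\<lambda>i. (\<Sum>s<t. d s i) + u i) i) \<partial>PiM {..<N} (\<lambda>_. U \<eta>))
     \<le> (\<Sum>i<N. (\<Sum>s<T. d s i) * x i) + \<eta> * real C + real T * K\<^sup>2 / \<eta>"
proof -
  let ?Q = "PiM {..<N} (\<lambda>_. U \<eta>)"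
  interpret Q: prob_space ?Q using prob_U[OF eta] by (intro prob_space_PiM) auto
  define g where "g t s = (\<Sum>i<N. d t i * M s i)" for t s
  define b where "b t i = (\<Sum>s<t. d s i)" for t i
  define b' where "b' t i = b t i + (if i < N then d t i else 0)" for t i
  have gm: "g t \<in> borel_measurable (PiM UNIV (\<lambda>_. borel))" for t
    unfolding g_def by (rule g_meas[OF Mm])
  have gb: "t < T \<Longrightarrow> 0 \<le> g t s \<and> g t s \<le> (\<Sum>i<N. d t i)" for t s
    unfolding g_def by (rule g_bound[OF o]) (simp add: dpos)
  have L0: "t < T \<Longrightarrow> 0 \<le> (\<Sum>i<N. d t i)" for t by (auto intro!: sum_nonneg dpos)
  have gi: "t < T \<Longrightarrow> integrable ?Q (\<lambda>u. g t (\<lambda>i. bb i + u i))" for t bb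
    by (rule Q.integrable_const_bound[where B="\<Sum>i<N. d t i"])
       (use gb L0 shiftQ_meas[OF gm] in \<open>auto\<close>)
  have step: "(\<integral>u. g t (\<lambda>i. b t i + u i) \<partial>?Q) \<le> (\<integral>u. g t (\<lambda>i. b' t i + u i) \<partial>?Q) + K\<^sup>2 / \<eta>"
    if t: "t < T" for t
  proof -
    have "(\<integral>u. g t (\<lambda>i. b t i + u i) \<partial>?Q) \<le> (\<integral>u. g t (\<lambda>i. (b t i + (if i < N then d t i else 0)) + u i) \<partial>?Q)
          + (\<Sum>i<N. d t i) * (\<Sum>i<N. d t i) / \<eta>"
      by (rule stab[OF eta gm gb[OF t]]) (simp add: dpos t)
    also have "(\<Sum>i<N. d t i) * (\<Sum>i<N. d t i) / \<eta> \<le> K\<^sup>2 / \<eta>"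
      using L0[OF t] dsum[OF t] eta by (auto simp: power2_eq_square intro!: divide_right_mono mult_mono)
    finally show ?thesis by (simp add: b'_def)
  qed
  have "(\<Sum>t<T. \<integral>u. g t (\<lambda>i. b t i + u i) \<partial>?Q) \<le> (\<Sum>t<T. (\<integral>u. g t (\<lambda>i. b' t i + u i) \<partial>?Q) + K\<^sup>2 / \<eta>)"
    by (rule sum_mono) (rule step, simp)
  also have "\<dots> = (\<integral>u. (\<Sum>t<T. g t (\<lambda>i. b' t i + u i)) \<partial>?Q) + real T * K\<^sup>2 / \<eta>"
    using gi by (simp add: sum.distrib)
  also have "(\<integral>u. (\<Sum>t<T. g t (\<lambda>i. b' t i + u i)) \<partial>?Q) \<le> (\<integral>u. (\<Sum>i<N. (\<Sum>s<T. d s i) * x i) + \<eta> * real C \<partial>?Q)"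
  proof (rule integral_mono_AE)
    show "integrable ?Q (\<lambda>u. \<Sum>t<T. g t (\<lambda>i. b' t i + u i))" by (rule Bochner_Integration.integrable_sum) (rule gi, simp)
    show "integrable ?Q (\<lambda>u. (\<Sum>i<N. (\<Sum>s<T. d s i) * x i) + \<eta> * real C)" by simp
    show "AE u in ?Q. (\<Sum>t<T. g t (\<lambda>i. b' t i + u i)) \<le> (\<Sum>i<N. (\<Sum>s<T. d s i) * x i) + \<eta> * real C"
      using AE_cube[OF eta, of N]
    proof eventually_elim
      case (elim u)
      have "(\<Sum>t<T. \<Sum>i<N. d t i * M (\<lambda>i. ((\<Sum>s<t. d s i) + (if i < N then d t i else 0)) + u i) i)
          \<le> (\<Sum>i<N. (\<Sum>s<T. d s i) * x i) + \<eta> * real C"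
        by (rule btl[OF o x]) (use elim in auto)
      then show ?case by (simp add: g_def b'_def b_def)
    qed
  qed
  also have "(\<integral>u. (\<Sum>i<N. (\<Sum>s<T. d s i) * x i) + \<eta> * real C \<partial>?Q) = (\<Sum>i<N. (\<Sum>s<T. d s i) * x i) + \<eta> * real C"
    by (simp add: Q.prob_space)
  finally show ?thesis by (simp add: g_def b_def)
qed



lemma marginal:
  fixes h :: "(nat \<Rightarrow> real) \<Rightarrow> real"
  assumes eta: "0 < \<eta>" and t: "t < T"
    and hm: "h \<in> borel_measurable (PiM {..<N} (\<lambda>_. U \<eta>))"
  shows "(\<integral>\<gamma>. h (\<lambda>i. \<gamma> (t, i)) \<partial>pert_space T N \<eta>) = (\<integral>u. h u \<partial>PiM {..<N} (\<lambda>_. U \<eta>))"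
proof -
  let ?K = "{..<T} \<times> {..<N}"
  have d: "distr (PiM ?K (\<lambda>_. U \<eta>)) (PiM {..<N} (\<lambda>_. U \<eta>)) (\<lambda>\<omega>. \<lambda>n\<in>{..<N}. \<omega> (t, n)) = PiM {..<N} (\<lambda>_. U \<eta>)"
    using distr_PiM_reindex[of ?K "\<lambda>_. U \<eta>" "\<lambda>i. (t, i)" "{..<N}"] prob_U[OF eta] t
    by (auto simp: inj_on_def)
  have rm: "(\<lambda>\<omega>. \<lambda>n\<in>{..<N}. \<omega> (t, n)) \<in> PiM ?K (\<lambda>_. U \<eta>) \<rightarrow>\<^sub>M PiM {..<N} (\<lambda>_. U \<eta>)"
    by (rule measurable_restrict) (use t in auto)
  have "(\<integral>u. h u \<partial>PiM {..<N} (\<lambda>_. U \<eta>)) = (\<integral>\<gamma>. h (\<lambda>n\<in>{..<N}. \<gamma> (t, n)) \<partial>PiM ?K (\<lambda>_. U \<eta>))"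
    by (subst d[symmetric]) (rule integral_distr[OF rm hm])
  also have "\<dots> = (\<integral>\<gamma>. h (\<lambda>i. \<gamma> (t, i)) \<partial>PiM ?K (\<lambda>_. U \<eta>))"
  proof (rule Bochner_Integration.integral_cong[OF refl])
    fix \<gamma> assume "\<gamma> \<in> space (PiM ?K (\<lambda>_. U \<eta>))"
    then have "(\<lambda>n\<in>{..<N}. \<gamma> (t, n)) = (\<lambda>i. \<gamma> (t, i))"
      by (auto simp: space_PiM PiE_def extensional_def restrict_def)
    then show "h (\<lambda>n\<in>{..<N}. \<gamma> (t, n)) = h (\<lambda>i. \<gamma> (t, i))" by simp
  qed
  finally show ?thesis by (simp add: pert_space_def)
qed



abbreviation Bern :: "real \<Rightarrow> bool measure" where
  "Bern f \<equiv> measure_pmf (bernoulli_pmf f)"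

lemma sample_idx_eq: "sample_idx T N r = Sigma {..<T} (\<lambda>t. Sigma {..<N} (\<lambda>i. {..<r t i}))"
  by (auto simp: sample_idx_def)

lemma finite_sample_idx: "finite (sample_idx T N r)"
  unfolding sample_idx_eq by auto

lemma prob_S: "prob_space (sample_space T N r f)"
  unfolding sample_space_def by (intro prob_space_PiM) (simp add: prob_space_measure_pmf)

lemma compS_meas:
  fixes \<phi> :: "bool \<Rightarrow> real"
  shows "(\<lambda>\<sigma>. \<phi> (\<sigma> k)) \<in> borel_measurable (sample_space T N r f)"
proof (cases "k \<in> sample_idx T N r")
  case True
  have "(\<lambda>\<sigma>. \<sigma> k) \<in> sample_space T N r f \<rightarrow>\<^sub>M Bern f"
    unfolding sample_space_def using True by simp
  moreover have "\<phi> \<in> borel_measurable (Bern f)" by simp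
  ultimately show ?thesis by (rule measurable_compose)
next
  case False
  have eq: "\<And>\<sigma>. \<sigma> \<in> space (sample_space T N r f) \<Longrightarrow> \<phi> (\<sigma> k) = \<phi> undefined"
    using False by (cases k) (auto simp: sample_space_def space_PiM PiE_def extensional_def)
  show ?thesis
    by (rule Sigma_Algebra.measurable_cong[where f="\<lambda>\<sigma>. \<phi> (\<sigma> k)" and g="\<lambda>\<sigma>. \<phi> undefined" and M="sample_space T N r f", THEN iffD2]) (simp_all add: eq)
qed

lemma dhat_sum: "real (dhat r \<sigma> t i) = (\<Sum>j<r t i. of_bool (\<sigma> (t, i, j)))"
proof -
  have "{j. j < r t i \<and> \<sigma> (t, i, j)} = {..<r t i} \<inter> {j. \<sigma> (t, i, j)}" by auto
  then show ?thesis
    by (simp add: dhat_def sum.If_cases[where h="\<lambda>_. 1" and g="\<lambda>_. 0"] of_bool_def)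
qed

lemma rhat_sum: "rhat r f \<sigma> t i = (\<Sum>j<r t i. of_bool (\<sigma> (t, i, j))) / f"
  by (simp add: rhat_def dhat_sum)

lemma rhat_meas: "(\<lambda>\<sigma>. rhat r f \<sigma> t i) \<in> borel_measurable (sample_space T N r f)"
  unfolding rhat_sum
  by (intro borel_measurable_divide borel_measurable_sum borel_measurable_const compS_meas)

lemma rhat_nonneg: "0 < f \<Longrightarrow> 0 \<le> rhat r f \<sigma> t i"
  by (simp add: rhat_def)

lemma dhat_le: "dhat r \<sigma> t i \<le> r t i"
proof -
  have "{j. j < r t i \<and> \<sigma> (t, i, j)} \<subseteq> {..<r t i}" by auto
  then show ?thesis unfolding dhat_def using card_mono[of "{..<r t i}"] by fastforce
qed

lemma rhat_sum_le:
  assumes "0 < f" and "(\<Sum>i<N. r t i) = B"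
  shows "(\<Sum>i<N. rhat r f \<sigma> t i) \<le> real B / f"
proof -
  have "(\<Sum>i<N. rhat r f \<sigma> t i) = (\<Sum>i<N. real (dhat r \<sigma> t i)) / f"
    by (simp add: rhat_def sum_divide_distrib)
  also have "\<dots> \<le> (\<Sum>i<N. real (r t i)) / f"
    using assms dhat_le by (intro divide_right_mono sum_mono) auto
  also have "\<dots> = real B / f" using assms(2) by (metis of_nat_sum)
  finally show ?thesis .
qed

lemma unbias1:
  fixes h :: "(nat \<times> nat \<times> nat \<Rightarrow> bool) \<Rightarrow> real"
  assumes f: "0 \<le> f" "f \<le> 1" and k: "k \<in> sample_idx T N r"
    and hm: "h \<in> borel_measurable (sample_space T N r f)"
    and hb: "\<And>\<sigma>. \<bar>h \<sigma>\<bar> \<le> H"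
    and inv: "\<And>\<sigma> b. h (\<sigma>(k := b)) = h \<sigma>"
  shows "(\<integral>\<sigma>. of_bool (\<sigma> k) * h \<sigma> \<partial>sample_space T N r f) = f * (\<integral>\<sigma>. h \<sigma> \<partial>sample_space T N r f)"
proof -
  interpret product_sigma_finite "\<lambda>_. Bern f"
    by (simp add: product_sigma_finite_def prob_space_imp_sigma_finite prob_space_measure_pmf)
  interpret S: prob_space "sample_space T N r f" by (rule prob_S)
  define I' where "I' = sample_idx T N r - {k}"
  have SI: "sample_space T N r f = PiM (insert k I') (\<lambda>_. Bern f)" "finite I'" "k \<notin> I'"
    using k finite_sample_idx[of T N r] by (auto simp: sample_space_def I'_def insert_absorb)
  have H0: "0 \<le> H" using hb[of undefined] by linarith
  have i1: "integrable (sample_space T N r f) (\<lambda>\<sigma>. of_bool (\<sigma> k) * h \<sigma>)"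
    by (rule S.integrable_const_bound[where B=H])
       (use H0 hb in \<open>auto intro!: AE_I2 borel_measurable_times compS_meas hm\<close>)
  have i2: "integrable (sample_space T N r f) h"
    by (rule S.integrable_const_bound[where B=H]) (auto simp: hb hm)
  have "(\<integral>\<sigma>. of_bool (\<sigma> k) * h \<sigma> \<partial>sample_space T N r f)
      = (\<integral>x. (\<integral>y. of_bool ((x(k:=y)) k) * h (x(k:=y)) \<partial>Bern f) \<partial>PiM I' (\<lambda>_. Bern f))"
    using i1 unfolding SI(1) by (rule product_integral_insert[OF SI(2,3)])
  also have "\<dots> = (\<integral>x. f * h x \<partial>PiM I' (\<lambda>_. Bern f))"
    using f by (simp add: inv)
  also have "\<dots> = f * (\<integral>x. h x \<partial>PiM I' (\<lambda>_. Bern f))" by simp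
  also have "(\<integral>x. h x \<partial>PiM I' (\<lambda>_. Bern f)) = (\<integral>x. (\<integral>y. h (x(k:=y)) \<partial>Bern f) \<partial>PiM I' (\<lambda>_. Bern f))"
    using f by (simp add: inv algebra_simps)
  also have "\<dots> = (\<integral>\<sigma>. h \<sigma> \<partial>sample_space T N r f)"
    using i2 unfolding SI(1) by (rule product_integral_insert[OF SI(2,3), symmetric])
  finally show ?thesis .
qed



lemma unbias_r:
  fixes h :: "(nat \<times> nat \<times> nat \<Rightarrow> bool) \<Rightarrow> real"
  assumes f: "0 < f" "f \<le> 1" and t: "t < T" and i: "i < N"
    and hm: "h \<in> borel_measurable (sample_space T N r f)"
    and hb: "\<And>\<sigma>. \<bar>h \<sigma>\<bar> \<le> H"
    and inv: "\<And>\<sigma> j b. h (\<sigma>((t, i, j) := b)) = h \<sigma>"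
  shows "(\<integral>\<sigma>. rhat r f \<sigma> t i * h \<sigma> \<partial>sample_space T N r f) = real (r t i) * (\<integral>\<sigma>. h \<sigma> \<partial>sample_space T N r f)"
proof -
  interpret S: prob_space "sample_space T N r f" by (rule prob_S)
  have H0: "0 \<le> H" using hb[of undefined] by linarith
  have ij: "integrable (sample_space T N r f) (\<lambda>\<sigma>. of_bool (\<sigma> (t, i, j)) * h \<sigma>)" for j
    by (rule S.integrable_const_bound[where B=H])
       (use H0 hb in \<open>auto intro!: AE_I2 borel_measurable_times compS_meas hm\<close>)
  have "(\<integral>\<sigma>. rhat r f \<sigma> t i * h \<sigma> \<partial>sample_space T N r f)
      = (\<integral>\<sigma>. (\<Sum>j<r t i. of_bool (\<sigma> (t, i, j)) * h \<sigma>) / f \<partial>sample_space T N r f)"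
    by (simp add: rhat_sum sum_distrib_right)
  also have "\<dots> = (\<Sum>j<r t i. (\<integral>\<sigma>. of_bool (\<sigma> (t, i, j)) * h \<sigma> \<partial>sample_space T N r f)) / f"
    by (subst integral_divide_zero) (subst Bochner_Integration.integral_sum, use ij in auto)
  also have "\<dots> = (\<Sum>j<r t i. f * (\<integral>\<sigma>. h \<sigma> \<partial>sample_space T N r f)) / f"
  proof (intro arg_cong[where f="\<lambda>x. x / f"] sum.cong refl)
    fix j assume "j \<in> {..<r t i}"
    then have k: "(t, i, j) \<in> sample_idx T N r" using t i by (auto simp: sample_idx_def)
    show "(\<integral>\<sigma>. of_bool (\<sigma> (t, i, j)) * h \<sigma> \<partial>sample_space T N r f) = f * (\<integral>\<sigma>. h \<sigma> \<partial>sample_space T N r f)"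
      by (rule unbias1[OF _ f(2) k hm hb inv]) (use f in simp)
  qed
  also have "\<dots> = real (r t i) * (\<integral>\<sigma>. h \<sigma> \<partial>sample_space T N r f)"
    using f by simp
  finally show ?thesis .
qed

lemma rhat_upd:
  assumes "s < t"
  shows "rhat r f (\<sigma>((t, i, j) := b)) s i' = rhat r f \<sigma> s i'"
  using assms by (simp add: rhat_def dhat_def)

lemma rhat_bound: "0 < f \<Longrightarrow> \<bar>rhat r f \<sigma> t i\<bar> \<le> real (r t i) / f"
  using dhat_le[of r \<sigma> t i] by (simp add: rhat_def divide_right_mono)



lemma final_arith:
  fixes K T C :: real
  assumes K: "0 < K" and T: "0 < T" and C: "0 < C"
  defines "\<eta> \<equiv> K * sqrt (T / (2 * C))"
  shows "\<eta> * C + T * K\<^sup>2 / \<eta> \<le> 2 * sqrt 2 * K * sqrt (C * T)"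
proof -
  define q where "q = sqrt (T / (2 * C))"
  have q: "0 < q" using T C by (simp add: q_def)
  have q2: "q\<^sup>2 = T / (2 * C)" using T C by (simp add: q_def)
  have Tq: "T = 2 * C * q\<^sup>2" using q2 C by (simp add: field_simps)
  have "sqrt (C * T) = sqrt ((C * q)\<^sup>2 * 2)" by (simp add: Tq power2_eq_square algebra_simps)
  also have "\<dots> = C * q * sqrt 2" using C q by (simp add: real_sqrt_mult)
  finally have s: "sqrt (C * T) = C * q * sqrt 2" .
  have "\<eta> * C + T * K\<^sup>2 / \<eta> = 3 * C * K * q"
    unfolding \<eta>_def q_def[symmetric] using q K by (simp add: Tq power2_eq_square field_simps)
  also have "\<dots> \<le> 4 * C * K * q" using C K q by simp
  also have "\<dots> = 2 * sqrt 2 * K * sqrt (C * T)" unfolding s by (simp add: algebra_simps)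
  finally show ?thesis .
qed

lemma simplex_ne: "C \<le> N \<Longrightarrow> capped_simplex N C \<noteq> {}"
proof -
  assume CN: "C \<le> N"
  have "{..<N} \<inter> {i. i < C} = {..<C}" using CN by auto
  then have "(\<Sum>i<N. (if i < C then 1 else 0 :: real)) = real C"
    by (simp add: sum.If_cases)
  then have "(\<lambda>i. if i < C then 1 else 0 :: real) \<in> capped_simplex N C"
    by (simp add: capped_simplex_def)
  then show ?thesis by blast
qed



theorem corollary3:
  fixes N C B T :: nat and r :: "nat \<Rightarrow> nat \<Rightarrow> nat" and f :: real
    and M :: "(nat \<Rightarrow> real) \<Rightarrow> (nat \<Rightarrow> real)"
  assumes "0 < C" and "2 * C < N" and "0 < B" and "0 < T"
    and "0 < f" and "f \<le> 1"
    and "\<forall>t<T. (\<Sum>i<N. r t i) = B"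
    and "is_min_oracle N C M"
    and "M \<in> PiM UNIV (\<lambda>_. borel) \<rightarrow>\<^sub>M PiM UNIV (\<lambda>_. borel)"
  shows "nfpl_pseudo_regret N C T r f (real B / f * sqrt (real T / (2 * real C))) M
           \<le> 2 * sqrt 2 * (real B / f) * sqrt (real C * real T)"
proof -
  note C0 = assms(1) and CN = assms(2) and B0 = assms(3) and T0 = assms(4) and f0 = assms(5)
    and f1 = assms(6) and rB = assms(7) and o = assms(8) and Mm = assms(9)
  define K where "K = real B / f"
  define \<eta> where "\<eta> = real B / f * sqrt (real T / (2 * real C))"
  have K0: "0 < K" using B0 f0 by (simp add: K_def)
  have eta: "0 < \<eta>" using B0 f0 T0 C0 by (simp add: \<eta>_def)
  define S where "S = sample_space T N r f"
  define P where "P = pert_space T N \<eta>"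
  interpret S: prob_space S unfolding S_def by (rule prob_S)
  interpret P: prob_space P unfolding P_def pert_space_def using prob_U[OF eta] by (intro prob_space_PiM) auto
  interpret SP: pair_sigma_finite S P
    by (simp add: pair_sigma_finite_def S.sigma_finite_measure_axioms P.sigma_finite_measure_axioms)
  interpret SPp: prob_space "S \<Otimes>\<^sub>M P" by (rule prob_space_pair) unfold_locales
  define a where "a \<sigma> t i = (\<Sum>s<t. rhat r f \<sigma> s i)" for \<sigma> t i
  define v where "v \<sigma> \<gamma> t = (\<lambda>i. a \<sigma> t i + \<gamma> (t, i))" for \<sigma> \<gamma> t
  define F1 where "F1 \<sigma> \<gamma> = (\<Sum>t<T. \<Sum>i<N. real (r t i) * M (v \<sigma> \<gamma> t) i)" for \<sigma> \<gamma>
  define F2 where "F2 \<sigma> \<gamma> = (\<Sum>t<T. \<Sum>i<N. rhat r f \<sigma> t i * M (v \<sigma> \<gamma> t) i)" for \<sigma> \<gamma>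
  have Mc: "(\<lambda>s. M s i) \<in> borel_measurable (PiM UNIV (\<lambda>_. borel))" for i
    using measurable_compose[OF Mm measurable_component_singleton[of i UNIV "\<lambda>_. borel"]] by simp
  have rS: "(\<lambda>\<sigma>. rhat r f \<sigma> t i) \<in> borel_measurable S" for t i
    unfolding S_def by (rule rhat_meas)
  have aS: "(\<lambda>\<sigma>. a \<sigma> t i) \<in> borel_measurable S" for t i
    unfolding a_def by (intro borel_measurable_sum rS)
  have cP: "(\<lambda>\<gamma>. \<gamma> k) \<in> borel_measurable P" for k
    unfolding P_def pert_space_def by (rule comp_meas_PiM) simp
  have vSP: "(\<lambda>\<omega>. v (fst \<omega>) (snd \<omega>) t) \<in> (S \<Otimes>\<^sub>M P) \<rightarrow>\<^sub>M PiM UNIV (\<lambda>_. borel)" for t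
    unfolding v_def
    by (rule vec_meas) (intro borel_measurable_add measurable_compose[OF measurable_fst aS] measurable_compose[OF measurable_snd cP])
  have MSP: "(\<lambda>\<omega>. M (v (fst \<omega>) (snd \<omega>) t) i) \<in> borel_measurable (S \<Otimes>\<^sub>M P)" for t i
    using measurable_compose[OF vSP Mc] .
  have vS: "(\<lambda>\<sigma>. v \<sigma> \<gamma> t) \<in> S \<rightarrow>\<^sub>M PiM UNIV (\<lambda>_. borel)" for \<gamma> t
    unfolding v_def by (rule vec_meas) (intro borel_measurable_add aS borel_measurable_const)
  have MS: "(\<lambda>\<sigma>. M (v \<sigma> \<gamma> t) i) \<in> borel_measurable S" for \<gamma> t i
    using measurable_compose[OF vS Mc] .
  have vP: "(\<lambda>\<gamma>. v \<sigma> \<gamma> t) \<in> P \<rightarrow>\<^sub>M PiM UNIV (\<lambda>_. borel)" for \<sigma> t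
    unfolding v_def by (rule vec_meas) (intro borel_measurable_add cP borel_measurable_const)
  have MP: "(\<lambda>\<gamma>. M (v \<sigma> \<gamma> t) i) \<in> borel_measurable P" for \<sigma> t i
    using measurable_compose[OF vP Mc] .
  have Mb: "i < N \<Longrightarrow> \<bar>M s i\<bar> \<le> 1" for s i using oracle_simp(1,2)[OF o] by fastforce
  have rhb: "\<bar>rhat r f \<sigma> t i\<bar> \<le> real (r t i) / f" for \<sigma> t i by (rule rhat_bound[OF f0])
  have ab: "\<bar>a * b\<bar> \<le> A" if "\<bar>a\<bar> \<le> A" "\<bar>b\<bar> \<le> 1" for a b A :: real
  proof -
    have "\<bar>a\<bar> * \<bar>b\<bar> \<le> A * 1" using that by (intro mult_mono) auto
    then show ?thesis by (simp add: abs_mult)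
  qed
  define BB where "BB = (\<Sum>t<T. \<Sum>i<N. real (r t i) / f + real (r t i))"
  have F1b: "\<bar>F1 \<sigma> \<gamma>\<bar> \<le> BB" for \<sigma> \<gamma>
  proof -
    have "\<bar>F1 \<sigma> \<gamma>\<bar> \<le> (\<Sum>t<T. \<Sum>i<N. \<bar>real (r t i) * M (v \<sigma> \<gamma> t) i\<bar>)"
      unfolding F1_def by (rule order.trans[OF sum_abs sum_mono]) (rule sum_abs)
    also have "\<dots> \<le> BB" unfolding BB_def
    proof (intro sum_mono)
      fix t i assume "i \<in> {..<N}"
      then have "\<bar>real (r t i) * M (v \<sigma> \<gamma> t) i\<bar> \<le> real (r t i)"
        using Mb by (simp add: abs_mult mult_left_le)
      moreover have "0 \<le> real (r t i) / f" using f0 by simp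
      ultimately show "\<bar>real (r t i) * M (v \<sigma> \<gamma> t) i\<bar> \<le> real (r t i) / f + real (r t i)" by linarith
    qed
    finally show ?thesis .
  qed
  have F2b: "\<bar>F2 \<sigma> \<gamma>\<bar> \<le> BB" for \<sigma> \<gamma>
  proof -
    have "\<bar>F2 \<sigma> \<gamma>\<bar> \<le> (\<Sum>t<T. \<Sum>i<N. \<bar>rhat r f \<sigma> t i * M (v \<sigma> \<gamma> t) i\<bar>)"
      unfolding F2_def by (rule order.trans[OF sum_abs sum_mono]) (rule sum_abs)
    also have "\<dots> \<le> BB" unfolding BB_def
    proof (intro sum_mono)
      fix t i assume "i \<in> {..<N}"
      then have "\<bar>rhat r f \<sigma> t i * M (v \<sigma> \<gamma> t) i\<bar> \<le> real (r t i) / f * 1"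
        using ab[OF rhb Mb] by simp
      then show "\<bar>rhat r f \<sigma> t i * M (v \<sigma> \<gamma> t) i\<bar> \<le> real (r t i) / f + real (r t i)" by simp
    qed
    finally show ?thesis .
  qed
  have F1m: "(\<lambda>(\<sigma>, \<gamma>). F1 \<sigma> \<gamma>) \<in> borel_measurable (S \<Otimes>\<^sub>M P)"
  proof -
    have "(\<lambda>\<omega>. F1 (fst \<omega>) (snd \<omega>)) \<in> borel_measurable (S \<Otimes>\<^sub>M P)"
      unfolding F1_def by (intro borel_measurable_sum borel_measurable_times borel_measurable_const MSP)
    then show ?thesis by (simp add: case_prod_unfold)
  qed
  have F2m: "(\<lambda>(\<sigma>, \<gamma>). F2 \<sigma> \<gamma>) \<in> borel_measurable (S \<Otimes>\<^sub>M P)"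
  proof -
    have "(\<lambda>\<omega>. F2 (fst \<omega>) (snd \<omega>)) \<in> borel_measurable (S \<Otimes>\<^sub>M P)"
      unfolding F2_def by (intro borel_measurable_sum borel_measurable_times MSP measurable_compose[OF measurable_fst rS])
    then show ?thesis by (simp add: case_prod_unfold)
  qed
  have i1: "integrable (S \<Otimes>\<^sub>M P) (\<lambda>(\<sigma>, \<gamma>). F1 \<sigma> \<gamma>)"
    by (rule SPp.integrable_const_bound[where B=BB]) (auto simp: F1b intro!: AE_I2 F1m)
  have i2: "integrable (S \<Otimes>\<^sub>M P) (\<lambda>(\<sigma>, \<gamma>). F2 \<sigma> \<gamma>)"
    by (rule SPp.integrable_const_bound[where B=BB]) (auto simp: F2b intro!: AE_I2 F2m)
  \<comment> \<open>unbiasedness, for fixed perturbations\<close>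
  have E2: "(\<integral>\<sigma>. F1 \<sigma> \<gamma> \<partial>S) = (\<integral>\<sigma>. F2 \<sigma> \<gamma> \<partial>S)" for \<gamma>
  proof -
    have int1: "integrable S (\<lambda>\<sigma>. real (r t i) * M (v \<sigma> \<gamma> t) i)" if "i < N" for t i
      by (rule S.integrable_const_bound[where B="real (r t i)"])
         (use ab[of "real (r t i)" "real (r t i)", OF _ Mb[OF that]] in \<open>auto intro!: AE_I2 MS borel_measurable_times borel_measurable_const\<close>)
    have int2: "integrable S (\<lambda>\<sigma>. rhat r f \<sigma> t i * M (v \<sigma> \<gamma> t) i)" if "i < N" for t i
      by (rule S.integrable_const_bound[where B="real (r t i) / f"])
         (use ab[OF rhb Mb[OF that]] in \<open>auto intro!: AE_I2 MS rS borel_measurable_times\<close>)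
    have "(\<integral>\<sigma>. F1 \<sigma> \<gamma> \<partial>S) = (\<Sum>t<T. \<Sum>i<N. (\<integral>\<sigma>. real (r t i) * M (v \<sigma> \<gamma> t) i \<partial>S))"
      unfolding F1_def
      by (subst Bochner_Integration.integral_sum, use int1 in \<open>auto intro!: Bochner_Integration.integrable_sum\<close>)
    also have "\<dots> = (\<Sum>t<T. \<Sum>i<N. (\<integral>\<sigma>. rhat r f \<sigma> t i * M (v \<sigma> \<gamma> t) i \<partial>S))"
    proof (intro sum.cong refl)
      fix t i assume t: "t \<in> {..<T}" and i: "i \<in> {..<N}"
      have inv: "M (v (\<sigma>((t, i, j) := b)) \<gamma> t) i = M (v \<sigma> \<gamma> t) i" for \<sigma> j b
        by (simp add: v_def a_def rhat_upd)
      have "(\<integral>\<sigma>. rhat r f \<sigma> t i * M (v \<sigma> \<gamma> t) i \<partial>S) = real (r t i) * (\<integral>\<sigma>. M (v \<sigma> \<gamma> t) i \<partial>S)"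
        unfolding S_def
        by (rule unbias_r[OF f0 f1, where H=1]) (use t i Mb MS inv in \<open>auto simp: S_def\<close>)
      then show "(\<integral>\<sigma>. real (r t i) * M (v \<sigma> \<gamma> t) i \<partial>S) = (\<integral>\<sigma>. rhat r f \<sigma> t i * M (v \<sigma> \<gamma> t) i \<partial>S)"
        by simp
    qed
    also have "\<dots> = (\<integral>\<sigma>. F2 \<sigma> \<gamma> \<partial>S)"
      unfolding F2_def
      by (subst Bochner_Integration.integral_sum, use int2 in \<open>auto intro!: Bochner_Integration.integrable_sum\<close>)
    finally show ?thesis .
  qed
  have E4: "(\<integral>\<gamma>. F2 \<sigma> \<gamma> \<partial>P) \<le> (\<Sum>i<N. (\<Sum>s<T. rhat r f \<sigma> s i) * x i) + \<eta> * real C + real T * K\<^sup>2 / \<eta>"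
    if x: "x \<in> capped_simplex N C" for \<sigma> x
  proof -
    have intP: "integrable P (\<lambda>\<gamma>. \<Sum>i<N. rhat r f \<sigma> t i * M (v \<sigma> \<gamma> t) i)" for t
      by (rule P.integrable_const_bound[where B="\<Sum>i<N. rhat r f \<sigma> t i"])
         (use g_bound[OF o, of "rhat r f \<sigma> t"] rhat_nonneg[OF f0] in
           \<open>auto intro!: AE_I2 MP borel_measurable_sum borel_measurable_times borel_measurable_const\<close>)
    have "(\<integral>\<gamma>. F2 \<sigma> \<gamma> \<partial>P) = (\<Sum>t<T. \<integral>\<gamma>. (\<Sum>i<N. rhat r f \<sigma> t i * M (v \<sigma> \<gamma> t) i) \<partial>P)"
      unfolding F2_def by (rule Bochner_Integration.integral_sum) (rule intP)
    also have "\<dots> = (\<Sum>t<T. \<integral>u. (\<Sum>i<N. rhat r f \<sigma> t i * M (\<lambda>i. (\<Sum>s<t. rhat r f \<sigma> s i) + u i) i) \<partial>PiM {..<N} (\<lambda>_. U \<eta>))"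
    proof (intro sum.cong refl)
      fix t assume "t \<in> {..<T}"
      then have t: "t < T" by simp
      show "(\<integral>\<gamma>. (\<Sum>i<N. rhat r f \<sigma> t i * M (v \<sigma> \<gamma> t) i) \<partial>P)
          = (\<integral>u. (\<Sum>i<N. rhat r f \<sigma> t i * M (\<lambda>i. (\<Sum>s<t. rhat r f \<sigma> s i) + u i) i) \<partial>PiM {..<N} (\<lambda>_. U \<eta>))"
        unfolding P_def v_def a_def
        by (rule marginal[OF eta t, where h="\<lambda>u. \<Sum>i<N. rhat r f \<sigma> t i * M (\<lambda>i. (\<Sum>s<t. rhat r f \<sigma> s i) + u i) i"])
           (rule shiftQ_meas[OF g_meas[OF Mm]])
    qed
    also have "\<dots> \<le> (\<Sum>i<N. (\<Sum>s<T. rhat r f \<sigma> s i) * x i) + \<eta> * real C + real T * K\<^sup>2 / \<eta>"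
      by (rule pathQ[OF eta o x Mm]) (use rhat_nonneg[OF f0] rhat_sum_le[OF f0] rB in \<open>auto simp: K_def\<close>)
    finally show ?thesis .
  qed
  have cost_eq: "nfpl_cost T N M r f = (\<lambda>(\<sigma>, \<gamma>). F1 \<sigma> \<gamma>)"
    by (auto simp: fun_eq_iff nfpl_cost_def nfpl_decision_def F1_def v_def a_def)
  define E where "E = (\<integral>\<omega>. nfpl_cost T N M r f \<omega> \<partial>nfpl_space T N r f \<eta>)"
  have E_eq: "E = (\<integral>\<sigma>. (\<integral>\<gamma>. F2 \<sigma> \<gamma> \<partial>P) \<partial>S)"
  proof -
    have "E = integral\<^sup>L (S \<Otimes>\<^sub>M P) (\<lambda>(\<sigma>, \<gamma>). F1 \<sigma> \<gamma>)"
      unfolding E_def cost_eq nfpl_space_def S_def P_def ..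
    also have "\<dots> = (\<integral>\<gamma>. (\<integral>\<sigma>. F1 \<sigma> \<gamma> \<partial>S) \<partial>P)" by (rule SP.integral_snd[OF i1, symmetric])
    also have "\<dots> = (\<integral>\<gamma>. (\<integral>\<sigma>. F2 \<sigma> \<gamma> \<partial>S) \<partial>P)" by (simp add: E2)
    also have "\<dots> = integral\<^sup>L (S \<Otimes>\<^sub>M P) (\<lambda>(\<sigma>, \<gamma>). F2 \<sigma> \<gamma>)" by (rule SP.integral_snd[OF i2])
    also have "\<dots> = (\<integral>\<sigma>. (\<integral>\<gamma>. F2 \<sigma> \<gamma> \<partial>P) \<partial>S)" by (rule SP.integral_fst[OF i2, symmetric])
    finally show ?thesis .
  qed
  define c where "c = \<eta> * real C + real T * K\<^sup>2 / \<eta>"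
  have Ebound: "E \<le> (\<Sum>t<T. \<Sum>i<N. real (r t i) * x i) + c" if x: "x \<in> capped_simplex N C" for x
  proof -
    have irh: "integrable S (\<lambda>\<sigma>. rhat r f \<sigma> s i)" for s i
      by (rule S.integrable_const_bound[where B="real (r s i) / f"]) (auto intro!: AE_I2 rS rhb)
    have "E \<le> (\<integral>\<sigma>. (\<Sum>i<N. (\<Sum>s<T. rhat r f \<sigma> s i) * x i) + c \<partial>S)"
      unfolding E_eq c_def
    proof (rule integral_mono)
      show "integrable S (\<lambda>\<sigma>. \<integral>\<gamma>. F2 \<sigma> \<gamma> \<partial>P)" by (rule SP.integrable_fst[OF i2])
      show "integrable S (\<lambda>\<sigma>. (\<Sum>i<N. (\<Sum>s<T. rhat r f \<sigma> s i) * x i) + (\<eta> * real C + real T * K\<^sup>2 / \<eta>))"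
        using irh by (auto intro!: Bochner_Integration.integrable_sum integrable_mult_left)
      fix \<sigma> show "(\<integral>\<gamma>. F2 \<sigma> \<gamma> \<partial>P) \<le> (\<Sum>i<N. (\<Sum>s<T. rhat r f \<sigma> s i) * x i) + (\<eta> * real C + real T * K\<^sup>2 / \<eta>)"
        using E4[OF x, of \<sigma>] by simp
    qed
    also have "\<dots> = (\<Sum>i<N. (\<Sum>s<T. (\<integral>\<sigma>. rhat r f \<sigma> s i \<partial>S)) * x i) + c"
      using irh by (simp add: Bochner_Integration.integrable_sum S.prob_space)
    also have "\<dots> = (\<Sum>i<N. (\<Sum>s<T. real (r s i)) * x i) + c"
    proof -
      have "(\<integral>\<sigma>. rhat r f \<sigma> s i \<partial>S) = real (r s i)" if "s < T" "i < N" for s i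
      proof -
        have "(\<integral>\<sigma>. rhat r f \<sigma> s i * (\<lambda>_. 1) \<sigma> \<partial>sample_space T N r f) = real (r s i) * (\<integral>\<sigma>. (\<lambda>_. 1::real) \<sigma> \<partial>sample_space T N r f)"
          by (rule unbias_r[OF f0 f1 that, where H=1]) auto
        then show ?thesis using S.prob_space by (simp add: S_def)
      qed
      then show ?thesis by simp
    qed
    also have "\<dots> = (\<Sum>t<T. \<Sum>i<N. real (r t i) * x i) + c"
      by (simp add: sum_distrib_right sum.swap[of _ "{..<N}"])
    finally show ?thesis .
  qed
  have "E - c \<le> (INF x\<in>capped_simplex N C. \<Sum>t<T. \<Sum>i<N. real (r t i) * x i)"
  proof (rule cINF_greatest)
    show "capped_simplex N C \<noteq> {}" using simplex_ne[of C N] CN by auto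
    fix x assume "x \<in> capped_simplex N C"
    from Ebound[OF this] show "E - c \<le> (\<Sum>t<T. \<Sum>i<N. real (r t i) * x i)" by linarith
  qed
  then have "nfpl_pseudo_regret N C T r f \<eta> M \<le> c"
    unfolding nfpl_pseudo_regret_def E_def[symmetric] by simp
  also have "c \<le> 2 * sqrt 2 * (real B / f) * sqrt (real C * real T)"
    unfolding c_def \<eta>_def K_def
    using final_arith[of "real B / f" "real T" "real C"] B0 f0 T0 C0 by simp
  finally show ?thesis unfolding \<eta>_def .
qed


end
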